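(* Let $f$ be an integer-valued function on the nonnegative integers such that $f(k)\ge 2 f(k-1) - 1$ for each $k\ge 1$ and $f(1)\ge 1$. If $M$ is a matroid with $\epsilon(M)\ge f(r(M))$ and $r(M)\ge 1$, then there is a round restriction $N$ of $M$ such that $\epsilon(N)\ge f(r(N))$ and $r(N)\ge 1$.
   Context: A matroid $M$ is round if $E(M)$ cannot be partitioned into two sets each of rank less than $r(M)$. A point is a rank-$1$ flat and $\epsilon(M)$ is the number of points of $M$. *)

theory Defs
  imports Main
begin

definition matroid :: "'a set \<Rightarrow> ('a set \<Rightarrow> bool) \<Rightarrow> bool" where
  "matroid E indep \<longleftrightarrow> finite E \<and> (\<forall>I. indep I \<longrightarrow> I \<subseteq> E) \<and> indep {} \<and>
     (\<forall>I J. indep J \<and> I \<subseteq> J \<longrightarrow> indep I) \<and>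
     (\<forall>I J. indep I \<and> indep J \<and> card I < card J \<longrightarrow> (\<exists>e\<in>J - I. indep (insert e I)))"

definition mrank :: "('a set \<Rightarrow> bool) \<Rightarrow> 'a set \<Rightarrow> nat" where
  "mrank indep X = Max {card I | I. I \<subseteq> X \<and> indep I}"

definition restr :: "('a set \<Rightarrow> bool) \<Rightarrow> 'a set \<Rightarrow> 'a set \<Rightarrow> bool" where
  "restr indep X = (\<lambda>I. indep I \<and> I \<subseteq> X)"

definition flat :: "'a set \<Rightarrow> ('a set \<Rightarrow> bool) \<Rightarrow> 'a set \<Rightarrow> bool" where
  "flat E indep F \<longleftrightarrow> F \<subseteq> E \<and> (\<forall>e \<in> E - F. mrank indep (insert e F) > mrank indep F)"

definition num_points :: "'a set \<Rightarrow> ('a set \<Rightarrow> bool) \<Rightarrow> nat" where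
  "num_points E indep = card {F. flat E indep F \<and> mrank indep F = 1}"

definition round :: "'a set \<Rightarrow> ('a set \<Rightarrow> bool) \<Rightarrow> bool" where
  "round E indep \<longleftrightarrow> (\<forall>A B. A \<union> B = E \<longrightarrow> A \<inter> B = {} \<longrightarrow>
      mrank indep A = mrank indep E \<or> mrank indep B = mrank indep E)"

end

theory Submission
  imports Defs
begin

lemma m_finite: "matroid E indep \<Longrightarrow> finite E" by (simp add: matroid_def)
lemma m_sub: "matroid E indep \<Longrightarrow> indep I \<Longrightarrow> I \<subseteq> E" by (simp add: matroid_def)
lemma m_empty: "matroid E indep \<Longrightarrow> indep {}" by (simp add: matroid_def)
lemma m_down: "matroid E indep \<Longrightarrow> indep J \<Longrightarrow> I \<subseteq> J \<Longrightarrow> indep I"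
  unfolding matroid_def by blast
lemma m_aug: "matroid E indep \<Longrightarrow> indep I \<Longrightarrow> indep J \<Longrightarrow> card I < card J \<Longrightarrow> \<exists>e\<in>J-I. indep (insert e I)"
  unfolding matroid_def by blast

lemma rk_set_fin: assumes "matroid E indep" shows "finite {card I | I. I \<subseteq> X \<and> indep I}"
proof -
  have "{card I | I. I \<subseteq> X \<and> indep I} \<subseteq> {..card E}"
    using assms m_finite m_sub by (fastforce intro: card_mono)
  thus ?thesis using finite_subset by blast
qed

lemma rk_ge: assumes "matroid E indep" "I \<subseteq> X" "indep I" shows "card I \<le> mrank indep X"
proof -
  have "card I \<in> {card I | I. I \<subseteq> X \<and> indep I}" using assms by blast
  thus ?thesis unfolding mrank_def using Max_ge[OF rk_set_fin[OF assms(1)]] by blast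
qed

lemma rk_ex: assumes "matroid E indep" shows "\<exists>I. I \<subseteq> X \<and> indep I \<and> card I = mrank indep X"
proof -
  have "\<exists>I. (0::nat) = card I \<and> I \<subseteq> X \<and> indep I"
    by (rule exI[of _ "{}"]) (simp add: m_empty[OF assms])
  hence "(0::nat) \<in> {card I |I. I \<subseteq> X \<and> indep I}" by (simp only: mem_Collect_eq)
  hence ne: "{card I |I. I \<subseteq> X \<and> indep I} \<noteq> {}" by blast
  have "mrank indep X \<in> {card I |I. I \<subseteq> X \<and> indep I}" unfolding mrank_def
    using Max_in[OF rk_set_fin[OF assms] ne] .
  thus ?thesis by (auto simp del: card_eq_0_iff)
qed

lemma rk_mono: assumes "matroid E indep" "X \<subseteq> Y" shows "mrank indep X \<le> mrank indep Y"
proof -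
  obtain I where "I \<subseteq> X" "indep I" "card I = mrank indep X" using rk_ex[OF assms(1)] by blast
  thus ?thesis using rk_ge[OF assms(1), of I Y] assms(2) by auto
qed

lemma rk_subadd: assumes "matroid E indep" shows "mrank indep (A \<union> B) \<le> mrank indep A + mrank indep B"
proof -
  obtain I where I: "I \<subseteq> A \<union> B" "indep I" "card I = mrank indep (A \<union> B)" using rk_ex[OF assms(1)] by blast
  have "I = (I \<inter> A) \<union> (I \<inter> B)" using I by auto
  hence "card I \<le> card (I \<inter> A) + card (I \<inter> B)" by (metis card_Un_le)
  moreover have "card (I \<inter> A) \<le> mrank indep A"
    using rk_ge[OF assms, of "I \<inter> A" A] m_down[OF assms I(2)] by auto
  moreover have "card (I \<inter> B) \<le> mrank indep B"
    using rk_ge[OF assms, of "I \<inter> B" B] m_down[OF assms I(2)] by auto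
  ultimately show ?thesis using I by linarith
qed

lemma mrank_restr: "mrank (restr indep A) Y = mrank indep (Y \<inter> A)"
proof -
  have "{card I |I. I \<subseteq> Y \<and> restr indep A I} = {card I |I. I \<subseteq> Y \<inter> A \<and> indep I}"
    unfolding restr_def by auto
  thus ?thesis unfolding mrank_def by simp
qed

lemma restr_restr: "X \<subseteq> A \<Longrightarrow> restr (restr indep A) X = restr indep X"
  unfolding restr_def by auto

lemma restr_self: "matroid E indep \<Longrightarrow> restr indep E = indep"
  unfolding restr_def using m_sub by fastforce

lemma matroid_restr: assumes "matroid E indep" "A \<subseteq> E" shows "matroid A (restr indep A)"
proof -
  have fin: "finite A" using assms m_finite finite_subset by blast
  have a: "\<forall>I. restr indep A I \<longrightarrow> I \<subseteq> A" unfolding restr_def by blast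
  have b: "restr indep A {}" unfolding restr_def using m_empty[OF assms(1)] by simp
  have c: "\<forall>I J. restr indep A J \<and> I \<subseteq> J \<longrightarrow> restr indep A I"
    unfolding restr_def using m_down[OF assms(1)] by blast
  have d: "\<forall>I J. restr indep A I \<and> restr indep A J \<and> card I < card J \<longrightarrow> (\<exists>e\<in>J - I. restr indep A (insert e I))"
  proof (intro allI impI)
    fix I J assume h: "restr indep A I \<and> restr indep A J \<and> card I < card J"
    obtain e where "e \<in> J - I" "indep (insert e I)"
      using m_aug[OF assms(1)] h unfolding restr_def by blast
    thus "\<exists>e\<in>J - I. restr indep A (insert e I)" using h unfolding restr_def by blast
  qed
  show ?thesis unfolding matroid_def using fin a b c d by blast
qed

lemma rk_single: "matroid E indep \<Longrightarrow> indep {x} \<Longrightarrow> x \<in> X \<Longrightarrow> 1 \<le> mrank indep X"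
  using rk_ge[of E indep "{x}" X] by auto

lemma L:
  assumes m: "matroid E indep" and P: "mrank indep P \<le> 1" and x: "x \<in> P" "indep {x}"
    and ex: "mrank indep {x, e} \<le> 1"
  shows "mrank indep (insert e P) \<le> 1"
proof (rule ccontr)
  assume nt: "\<not> mrank indep (insert e P) \<le> 1"
  obtain J where J: "J \<subseteq> insert e P" "indep J" "card J = mrank indep (insert e P)"
    using rk_ex[OF m] by blast
  have "card {x} < card J" using J nt by simp
  then obtain y where y: "y \<in> J - {x}" "indep (insert y {x})" using m_aug[OF m x(2) J(2)] by blast
  have c2: "card (insert y {x}) = 2" using y by auto
  show False
  proof (cases "y = e")
    case True
    hence "insert y {x} \<subseteq> {x, e}" by auto
    hence "card (insert y {x}) \<le> mrank indep {x, e}" by (rule rk_ge[OF m _ y(2)])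
    thus False using ex c2 by linarith
  next
    case False
    hence "insert y {x} \<subseteq> P" using y J x by auto
    hence "card (insert y {x}) \<le> mrank indep P" by (rule rk_ge[OF m _ y(2)])
    thus False using P c2 by linarith
  qed
qed

definition pts where "pts E indep = {F. flat E indep F \<and> mrank indep F = 1}"

lemma pts_nonloop: assumes m: "matroid E indep" and "mrank indep P = 1"
  shows "\<exists>x\<in>P. indep {x}"
proof -
  obtain I where I: "I \<subseteq> P" "indep I" "card I = mrank indep P" using rk_ex[OF m, of P] by blast
  hence "card I = 1" using assms(2) by simp
  then obtain x where "I = {x}" by (rule card_1_singletonE)
  thus ?thesis using I by auto
qed

lemma pts_restr:
  assumes m: "matroid E indep" and A: "A \<subseteq> E" and P: "P \<in> pts E indep"
    and x: "x \<in> P \<inter> A" "indep {x}"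
  shows "P \<inter> A \<in> pts A (restr indep A)"
proof -
  have PE: "P \<subseteq> E" "mrank indep P = 1" "\<forall>e\<in>E-P. mrank indep (insert e P) > mrank indep P"
    using P unfolding pts_def flat_def by auto
  have r1: "mrank indep (P \<inter> A) = 1"
    using rk_single[OF m x(2), of "P \<inter> A"] rk_mono[OF m, of "P \<inter> A" P] x PE by auto
  have "mrank indep (insert e (P \<inter> A)) > 1" if e: "e \<in> A - (P \<inter> A)" for e
  proof -
    have "e \<in> E - P" using e A by auto
    hence "mrank indep (insert e P) > 1" using PE by auto
    hence "\<not> mrank indep {x, e} \<le> 1" using L[OF m _ _ x(2), of P e] PE x by fastforce
    moreover have "mrank indep {x, e} \<le> mrank indep (insert e (P \<inter> A))"
      using rk_mono[OF m] x by auto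
    ultimately show ?thesis by linarith
  qed
  moreover have "insert e (P \<inter> A) \<inter> A = insert e (P \<inter> A)" if "e \<in> A" for e using that by auto
  ultimately show ?thesis unfolding pts_def flat_def mrank_restr using r1
    by (auto simp: Int_absorb2)
qed

lemma pts_inj:
  assumes m: "matroid E indep" and P1: "P1 \<in> pts E indep" and P2: "P2 \<in> pts E indep"
    and x: "x \<in> P1" "x \<in> P2" "indep {x}" and eq: "P1 \<inter> A = P2 \<inter> A"
  shows "P1 \<subseteq> P2"
proof
  fix e assume e: "e \<in> P1"
  show "e \<in> P2"
  proof (rule ccontr)
    assume "e \<notin> P2"
    moreover have "P1 \<subseteq> E" using P1 unfolding pts_def flat_def by auto
    ultimately have "mrank indep (insert e P2) > 1" using P2 e unfolding pts_def flat_def by auto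
    moreover have "mrank indep {x, e} \<le> 1"
      using rk_mono[OF m, of "{x,e}" P1] e x P1 unfolding pts_def by auto
    ultimately show False using L[OF m _ x(2) x(3)] P2 unfolding pts_def by fastforce
  qed
qed

lemma pts_fin: assumes m: "matroid E indep" and A: "A \<subseteq> E"
  shows "finite (pts A (restr indep A))"
proof -
  have "finite A" using m A m_finite finite_subset by blast
  hence "finite (Pow A)" by simp
  moreover have "pts A (restr indep A) \<subseteq> Pow A" unfolding pts_def flat_def by auto
  ultimately show ?thesis by (rule finite_subset[rotated])
qed

lemma pts_img: assumes m: "matroid E indep" and A: "A \<subseteq> E"
  shows "(\<lambda>P. P \<inter> A) ` {P \<in> pts E indep. \<exists>x\<in>P \<inter> A. indep {x}} \<subseteq> pts A (restr indep A)"
proof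
  fix Q assume "Q \<in> (\<lambda>P. P \<inter> A) ` {P \<in> pts E indep. \<exists>x\<in>P \<inter> A. indep {x}}"
  then obtain P x where "Q = P \<inter> A" "P \<in> pts E indep" "x \<in> P \<inter> A" "indep {x}" by blast
  thus "Q \<in> pts A (restr indep A)" using pts_restr[OF m A] by blast
qed

lemma pts_injon: assumes m: "matroid E indep"
  shows "inj_on (\<lambda>P. P \<inter> A) {P \<in> pts E indep. \<exists>x\<in>P \<inter> A. indep {x}}"
proof (rule inj_onI)
  fix P1 P2 assume a: "P1 \<in> {P \<in> pts E indep. \<exists>x\<in>P \<inter> A. indep {x}}"
    "P2 \<in> {P \<in> pts E indep. \<exists>x\<in>P \<inter> A. indep {x}}" "P1 \<inter> A = P2 \<inter> A"
  then obtain x where x: "x \<in> P1 \<inter> A" "indep {x}" by auto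
  hence x2: "x \<in> P2" using a(3) by auto
  have p1: "P1 \<in> pts E indep" and p2: "P2 \<in> pts E indep" using a(1,2) by auto
  have x1: "x \<in> P1" using x by auto
  have "P1 \<subseteq> P2" by (rule pts_inj[OF m p1 p2 x1 x2 x(2) a(3)])
  moreover have "P2 \<subseteq> P1" by (rule pts_inj[OF m p2 p1 x2 x1 x(2) a(3)[symmetric]])
  ultimately show "P1 = P2" by (rule subset_antisym)
qed

lemma pts_card_le:
  assumes m: "matroid E indep" and A: "A \<subseteq> E"
  shows "card {P \<in> pts E indep. \<exists>x\<in>P \<inter> A. indep {x}} \<le> card (pts A (restr indep A))"
  by (rule card_inj_on_le[OF pts_injon[OF m] pts_img[OF m A] pts_fin[OF m A]])

lemma num_points_split:
  assumes m: "matroid E indep" and AB: "A \<union> B = E"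
  shows "num_points E indep \<le> num_points A (restr indep A) + num_points B (restr indep B)"
proof -
  let ?PA = "{P \<in> pts E indep. \<exists>x\<in>P \<inter> A. indep {x}}"
  let ?PB = "{P \<in> pts E indep. \<exists>x\<in>P \<inter> B. indep {x}}"
  have "pts E indep \<subseteq> ?PA \<union> ?PB"
  proof
    fix P assume P: "P \<in> pts E indep"
    then obtain x where "x \<in> P" "indep {x}" using pts_nonloop[OF m] unfolding pts_def by blast
    moreover have "P \<subseteq> E" using P unfolding pts_def flat_def by auto
    ultimately show "P \<in> ?PA \<union> ?PB" using P AB by blast
  qed
  moreover have "pts E indep \<supseteq> ?PA \<union> ?PB" by blast
  ultimately have "pts E indep = ?PA \<union> ?PB" by blast
  hence "card (pts E indep) \<le> card ?PA + card ?PB" using card_Un_le[of ?PA ?PB] by simp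
  also have "\<dots> \<le> card (pts A (restr indep A)) + card (pts B (restr indep B))"
  proof (rule add_mono)
    show "card ?PA \<le> card (pts A (restr indep A))" using pts_card_le[OF m, of A] AB by blast
    show "card ?PB \<le> card (pts B (restr indep B))" using pts_card_le[OF m, of B] AB by blast
  qed
  finally show ?thesis unfolding num_points_def pts_def .
qed

lemma f_pos: fixes f :: "nat \<Rightarrow> int" assumes "\<forall>k\<ge>1. f k \<ge> 2 * f (k - 1) - 1" "f 1 \<ge> (1::int)"
  shows "k \<ge> 1 \<Longrightarrow> f k \<ge> 1"
proof (induction k)
  case 0 thus ?case by simp
next
  case (Suc k)
  show ?case
  proof (cases "k = 0")
    case True thus ?thesis using assms by simp
  next
    case False
    hence "f k \<ge> 1" using Suc by simp
    moreover have "f (Suc k) \<ge> 2 * f k - 1" using assms(1) by (metis diff_Suc_1 le_add1 plus_1_eq_Suc)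
    ultimately show ?thesis by linarith
  qed
qed

lemma f_mono: fixes f :: "nat \<Rightarrow> int" assumes "\<forall>k\<ge>1. f k \<ge> 2 * f (k - 1) - 1" "f 1 \<ge> (1::int)" "a \<le> b"
  shows "f a \<le> f b"
proof -
  have "f n \<le> f (Suc n)" for n
  proof -
    have s: "f (Suc n) \<ge> 2 * f n - 1" using assms(1) by (metis diff_Suc_1 le_add1 plus_1_eq_Suc)
    show ?thesis
    proof (cases "n = 0")
      case True thus ?thesis using s assms(2) by auto
    next
      case False thus ?thesis using s f_pos[OF assms(1,2), of n] by linarith
    qed
  qed
  thus ?thesis using lift_Suc_mono_le[of f] assms(3) by blast
qed

lemma main:
  fixes f :: "nat \<Rightarrow> int"
  assumes f1: "\<forall>k\<ge>1. f k \<ge> 2 * f (k - 1) - 1" and f2: "f 1 \<ge> 1"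
  shows "mrank indep E = n \<Longrightarrow> matroid E indep \<Longrightarrow> int (num_points E indep) \<ge> f (mrank indep E)
    \<Longrightarrow> mrank indep E \<ge> 1 \<Longrightarrow> \<exists>X \<subseteq> E. round X (restr indep X) \<and>
           int (num_points X (restr indep X)) \<ge> f (mrank (restr indep X) X) \<and>
           mrank (restr indep X) X \<ge> 1"
proof (induction n arbitrary: E indep rule: less_induct)
  case (less n)
  note m = less.prems(2)
  show ?case
  proof (cases "round E indep")
    case True
    thus ?thesis using less.prems restr_self[OF m] by auto
  next
    case False
    then obtain A B where AB: "A \<union> B = E" "A \<inter> B = {}" "mrank indep A \<noteq> mrank indep E"
      "mrank indep B \<noteq> mrank indep E" unfolding round_def by blast
    have rA: "mrank indep A < n" using rk_mono[OF m, of A E] AB less.prems(1) by auto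
    have rB: "mrank indep B < n" using rk_mono[OF m, of B E] AB less.prems(1) by auto
    have sub: "n \<le> mrank indep A + mrank indep B" using rk_subadd[OF m, of A B] AB less.prems(1) by auto
    have rA1: "mrank indep A \<ge> 1" using rB sub by linarith
    have rB1: "mrank indep B \<ge> 1" using rA sub by linarith
    have rrA: "mrank (restr indep A) A = mrank indep A" by (simp add: mrank_restr)
    have rrB: "mrank (restr indep B) B = mrank indep B" by (simp add: mrank_restr)
    have split: "num_points E indep \<le> num_points A (restr indep A) + num_points B (restr indep B)"
      using num_points_split[OF m AB(1)] .
    have fA: "f (mrank indep A) \<le> f (n - 1)" using f_mono[OF f1 f2] rA by auto
    have fB: "f (mrank indep B) \<le> f (n - 1)" using f_mono[OF f1 f2] rB by auto
    have fn: "f n \<ge> 2 * f (n - 1) - 1" using f1 less.prems(4,1) by auto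
    have "int (num_points A (restr indep A)) \<ge> f (mrank indep A) \<or>
          int (num_points B (restr indep B)) \<ge> f (mrank indep B)"
    proof -
      have "int (num_points E indep) \<le> int (num_points A (restr indep A)) + int (num_points B (restr indep B))"
        using split by linarith
      moreover have "f n \<le> int (num_points E indep)" using less.prems(3,1) by simp
      ultimately show ?thesis using fA fB fn by linarith
    qed
    thus ?thesis
    proof
      assume h: "int (num_points A (restr indep A)) \<ge> f (mrank indep A)"
      have "A \<subseteq> E" using AB by auto
      from less.IH[OF rA rrA matroid_restr[OF m this]] h rrA rA1
      obtain X where X: "X \<subseteq> A" "round X (restr (restr indep A) X)"
        "int (num_points X (restr (restr indep A) X)) \<ge> f (mrank (restr (restr indep A) X) X)"
        "mrank (restr (restr indep A) X) X \<ge> 1" by auto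
      thus ?thesis using restr_restr[OF X(1)] \<open>A \<subseteq> E\<close> by (metis order_trans)
    next
      assume h: "int (num_points B (restr indep B)) \<ge> f (mrank indep B)"
      have "B \<subseteq> E" using AB by auto
      from less.IH[OF rB rrB matroid_restr[OF m this]] h rrB rB1
      obtain X where X: "X \<subseteq> B" "round X (restr (restr indep B) X)"
        "int (num_points X (restr (restr indep B) X)) \<ge> f (mrank (restr (restr indep B) X) X)"
        "mrank (restr (restr indep B) X) X \<ge> 1" by auto
      thus ?thesis using restr_restr[OF X(1)] \<open>B \<subseteq> E\<close> by (metis order_trans)
    qed
  qed
qed

theorem lemma2p4:
  fixes f :: "nat \<Rightarrow> int" and E :: "'a set" and indep :: "'a set \<Rightarrow> bool"
  assumes "\<forall>k\<ge>1. f k \<ge> 2 * f (k - 1) - 1"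
    and "f 1 \<ge> 1"
    and "matroid E indep"
    and "int (num_points E indep) \<ge> f (mrank indep E)"
    and "mrank indep E \<ge> 1"
  shows "\<exists>X \<subseteq> E. round X (restr indep X) \<and>
           int (num_points X (restr indep X)) \<ge> f (mrank (restr indep X) X) \<and>
           mrank (restr indep X) X \<ge> 1"
  using main[OF assms(1,2) refl assms(3,4,5)] .

end
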